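(* Let $p>1$. For $c\ge0$ let $N(c)\ge0$ be defined by $N(c)^2+\frac{2}{p+1}N(c)^{p+1}=c$, and let $L(c)=4\int_0^1\bigl(1-z^2+\frac{2}{p+1}N(c)^{p-1}(1-z^{p+1})\bigr)^{-1/2}dz$ (the minimal period of the solutions of $\ddot y+y+|y|^{p-1}y=0$ with $\dot y^2+y^2+\frac{2}{p+1}|y|^{p+1}=c$, and $L(0)=2\pi$). Then $M=L^{-1}:(0,2\pi]\to[0,\infty)$ is $C^\infty$ on $(0,2\pi)$ and there is a constant $\alpha>0$ such that, as $s\to2\pi-$, $$M(s)=\alpha(2\pi-s)^{\frac{2}{p-1}}(1+O(2\pi-s)),\qquad \sqrt{M(s)}=\sqrt\alpha(2\pi-s)^{\frac1{p-1}}(1+O(2\pi-s)),$$ $$M'(s)=-\tfrac{2\alpha}{p-1}(2\pi-s)^{\frac{3-p}{p-1}}(1+O(2\pi-s)),\qquad (\sqrt M)'(s)=-\tfrac{\sqrt\alpha}{p-1}(2\pi-s)^{\frac{2-p}{p-1}}(1+O(2\pi-s)),$$ $$M''(s)=\tfrac{2\alpha(3-p)}{(p-1)^2}(2\pi-s)^{\frac{4-2p}{p-1}}(1+O(2\pi-s)),\qquad (\sqrt M)''(s)=\tfrac{\sqrt\alpha(2-p)}{(p-1)^2}(2\pi-s)^{\frac{3-2p}{p-1}}(1+O(2\pi-s)).$$ *)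

theory Defs
  imports "HOL-Analysis.Analysis" "HOL-Library.Landau_Symbols"
begin

definition Namp :: "real \<Rightarrow> real \<Rightarrow> real" where
  "Namp p c = (THE n. n \<ge> 0 \<and> n\<^sup>2 + 2 / (p + 1) * n powr (p + 1) = c)"

text \<open>Minimal period L(c) (integrand is improper at z = 1; Henstock-Kurzweil integral).\<close>
definition Lper :: "real \<Rightarrow> real \<Rightarrow> real" where
  "Lper p c = 4 * integral {0..1}
     (\<lambda>z. (1 - z\<^sup>2 + 2 / (p + 1) * Namp p c powr (p - 1) * (1 - z powr (p + 1))) powr (-1/2))"

definition smooth_on_real :: "(real \<Rightarrow> real) \<Rightarrow> real set \<Rightarrow> bool" where
  "smooth_on_real f S \<longleftrightarrow> (\<forall>k. \<forall>x\<in>S. ((deriv ^^ k) f) differentiable (at x))"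

text \<open>f(s) = C (2pi - s)^e (1 + O(2pi - s)) as s -> 2pi-, read as
  f(s) - C (2pi-s)^e = O((2pi-s)^(e+1)).\<close>
definition asymp_2pi :: "(real \<Rightarrow> real) \<Rightarrow> real \<Rightarrow> real \<Rightarrow> bool" where
  "asymp_2pi f C e \<longleftrightarrow>
     (\<lambda>s. f s - C * (2*pi - s) powr e) \<in> O[at_left (2*pi)](\<lambda>s. (2*pi - s) powr (e + 1))"

end

theory Submission
  imports Defs
begin


fun Ck :: "nat \<Rightarrow> (real \<Rightarrow> real) \<Rightarrow> real set \<Rightarrow> bool" where
  "Ck 0 f S = continuous_on S f"
| "Ck (Suc k) f S = ((\<forall>x\<in>S. f differentiable (at x)) \<and> Ck k (deriv f) S)"

lemma Ck_cong:
  assumes "open S" "\<And>x. x \<in> S \<Longrightarrow> f x = g x" "Ck k f S"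
  shows "Ck k g S"
  using assms
proof (induction k arbitrary: f g)
  case 0
  then show ?case using continuous_on_cong by (metis Ck.simps(1))
next
  case (Suc k)
  have d: "g differentiable (at x)" if "x \<in> S" for x
  proof -
    from Suc.prems(3) that have "f differentiable (at x)" by simp
    then have "(f has_real_derivative deriv f x) (at x)"
      using DERIV_deriv_iff_real_differentiable by blast
    then have "(g has_real_derivative deriv f x) (at x)"
      using has_field_derivative_transform_within_open[OF _ Suc.prems(1) that] Suc.prems(2) by blast
    then show ?thesis using real_differentiable_def by blast
  qed
  have e: "deriv f x = deriv g x" if "x \<in> S" for x
  proof (rule deriv_cong_ev)
    show "\<forall>\<^sub>F x in nhds x. f x = g x"
      using Suc.prems(1,2) that eventually_nhds by blast
  qed simp
  have "Ck k (deriv g) S"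
    using Suc.IH[OF Suc.prems(1) e] Suc.prems(3) by simp
  then show ?case using d by simp
qed

lemma Ck_Suc_imp: "Ck (Suc k) f S \<Longrightarrow> Ck k f S"
proof (induction k arbitrary: f)
  case 0
  then show ?case
    by (auto intro!: continuous_at_imp_continuous_on differentiable_imp_continuous_within)
next
  case (Suc k)
  then show ?case by simp
qed

lemma Ck_mono: "j \<le> k \<Longrightarrow> Ck k f S \<Longrightarrow> Ck j f S"
proof (induction k rule: dec_induct[of j])
  case (step n) then show ?case using Ck_Suc_imp by blast
qed auto

lemma Ck_imp_cont: "Ck k f S \<Longrightarrow> continuous_on S f"
  using Ck_mono[of 0 k] by fastforce

lemma Ck_SucI:
  assumes "open S" "\<And>x. x \<in> S \<Longrightarrow> (f has_real_derivative f' x) (at x)" "Ck k f' S"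
  shows "Ck (Suc k) f S"
proof -
  have "Ck k (deriv f) S"
    by (rule Ck_cong[OF assms(1) _ assms(3)]) (metis DERIV_imp_deriv assms(2))
  moreover have "\<forall>x\<in>S. f differentiable (at x)"
    using assms(2) real_differentiable_def by blast
  ultimately show ?thesis by simp
qed

lemma Ck_deriv: "Ck (Suc k) f S \<Longrightarrow> x \<in> S \<Longrightarrow> (f has_real_derivative deriv f x) (at x)"
  using DERIV_deriv_iff_real_differentiable by auto

lemma Ck_const: "Ck k (\<lambda>x. c) S"
proof (induction k arbitrary: c)
  case 0 then show ?case by simp
next
  case (Suc k)
  have "deriv (\<lambda>x. c) = (\<lambda>x. 0)" by (simp add: fun_eq_iff)
  then show ?case using Suc by simp
qed

lemma Ck_id: "Ck k (\<lambda>x. x) S"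
proof (cases k)
  case 0 then show ?thesis by (simp add: continuous_on_id)
next
  case (Suc j)
  have "deriv (\<lambda>x. x) = (\<lambda>x. 1::real)" by (simp add: fun_eq_iff)
  then show ?thesis using Suc Ck_const by simp
qed

lemma Ck_add:
  assumes "open S" "Ck k f S" "Ck k g S" shows "Ck k (\<lambda>x. f x + g x) S"
  using assms(2,3)
proof (induction k arbitrary: f g)
  case 0 then show ?case by (auto intro: continuous_on_add)
next
  case (Suc k)
  have dd: "((\<lambda>x. f x + g x) has_real_derivative (deriv f x + deriv g x)) (at x)" if "x \<in> S" for x
    using Suc.prems that by (auto intro!: derivative_intros simp: DERIV_deriv_iff_real_differentiable)
  have "Ck k (\<lambda>x. deriv f x + deriv g x) S" using Suc by simp
  then show ?case using Ck_SucI[OF assms(1) dd] by blast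
qed

lemma Ck_mult:
  assumes "open S" "Ck k f S" "Ck k g S" shows "Ck k (\<lambda>x. f x * g x) S"
  using assms(2,3)
proof (induction k arbitrary: f g)
  case 0 then show ?case by (auto intro: continuous_on_mult)
next
  case (Suc k)
  have dd: "((\<lambda>x. f x * g x) has_real_derivative (deriv f x * g x + f x * deriv g x)) (at x)" if "x \<in> S" for x
  proof -
    have "(f has_real_derivative deriv f x) (at x)" "(g has_real_derivative deriv g x) (at x)"
      using Suc.prems that by (auto simp: DERIV_deriv_iff_real_differentiable)
    from DERIV_mult'[OF this] show ?thesis by (simp add: algebra_simps)
  qed
  have "Ck k (\<lambda>x. deriv f x * g x) S"
    using Suc.IH[of "deriv f" g] Suc.prems Ck_Suc_imp by auto
  moreover have "Ck k (\<lambda>x. f x * deriv g x) S"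
    using Suc.IH[of f "deriv g"] Suc.prems Ck_Suc_imp by auto
  ultimately have "Ck k (\<lambda>x. deriv f x * g x + f x * deriv g x) S"
    using Ck_add[OF assms(1)] by blast
  then show ?case using Ck_SucI[OF assms(1) dd] by blast
qed

lemma Ck_cmult: "open S \<Longrightarrow> Ck k f S \<Longrightarrow> Ck k (\<lambda>x. c * f x) S"
  using Ck_mult[OF _ Ck_const] by blast

lemma Ck_comp:
  assumes "open S" "open T" "Ck k f T" "Ck k g S" "g ` S \<subseteq> T"
  shows "Ck k (\<lambda>x. f (g x)) S"
  using assms(3,4,5)
proof (induction k arbitrary: f g)
  case 0
  have "continuous_on T f" "continuous_on S g" using 0 by auto
  from continuous_on_compose2[OF this 0(3)] show ?case by simp
next
  case (Suc k)
  have dd: "((\<lambda>x. f (g x)) has_real_derivative (deriv f (g x) * deriv g x)) (at x)" if "x \<in> S" for x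
  proof -
    have "(f has_real_derivative deriv f (g x)) (at (g x))"
      using Suc.prems(1,3) that by (auto simp: DERIV_deriv_iff_real_differentiable)
    moreover have "(g has_real_derivative deriv g x) (at x)"
      using Suc.prems(2) that by (auto simp: DERIV_deriv_iff_real_differentiable)
    ultimately show ?thesis using DERIV_chain2 by blast
  qed
  have "Ck k (\<lambda>x. deriv f (g x)) S"
    using Suc.IH[of "deriv f" g] Suc.prems Ck_Suc_imp by auto
  then have "Ck k (\<lambda>x. deriv f (g x) * deriv g x) S"
    using Ck_mult[OF assms(1)] Suc.prems by auto
  then show ?case using Ck_SucI[OF assms(1) dd] by blast
qed

lemma Ck_subset: "open T \<Longrightarrow> T \<subseteq> S \<Longrightarrow> Ck k f S \<Longrightarrow> Ck k f T"
proof (induction k arbitrary: f)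
  case 0 then show ?case using continuous_on_subset by auto
next
  case (Suc k) then show ?case by auto
qed

lemma Ck_powr: "Ck k (\<lambda>x. c * x powr a) {0<..}"
proof (induction k arbitrary: c a)
  case 0
  show ?case by (auto intro!: continuous_intros)
next
  case (Suc k)
  have "((\<lambda>x. c * x powr a) has_real_derivative (c * a) * x powr (a - 1)) (at x)" if "x \<in> {0<..}" for x
    using that by (auto intro!: derivative_eq_intros)
  then show ?case by (rule Ck_SucI[OF _ _ Suc.IH[of "c*a" "a - 1"], rotated]) auto
qed

lemma Ck_inverse: "Ck k (\<lambda>x. 1 / x) {0<..}"
  using Ck_cong[OF _ _ Ck_powr[of k 1 "-1"]] by (simp add: powr_minus_divide)

lemma Ck_sqrt: "Ck k sqrt {0<..}"
  using Ck_cong[OF _ _ Ck_powr[of k 1 "1/2"]] by (simp add: powr_half_sqrt)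

definition Cinf where "Cinf f S = (\<forall>k. Ck k f S)"

lemma Ck_deriv_iter:
  "Ck (Suc k) f S \<Longrightarrow> x \<in> S \<Longrightarrow> ((deriv ^^ k) f) differentiable (at x)"
proof (induction k arbitrary: f)
  case 0 then show ?case by simp
next
  case (Suc k)
  then have "((deriv ^^ k) (deriv f)) differentiable (at x)" by simp
  then show ?case by (simp add: funpow_Suc_right del: funpow.simps)
qed

lemma Ck_iter: "Ck (j + k) f S \<Longrightarrow> Ck k ((deriv ^^ j) f) S"
proof (induction j arbitrary: f)
  case 0 then show ?case by simp
next
  case (Suc j)
  then have "Ck k ((deriv ^^ j) (deriv f)) S" by simp
  then show ?case by (simp add: funpow_Suc_right del: funpow.simps)
qed


lemma param_cont_slice:
  assumes "continuous_on (U \<times> {0..1::real}) (\<lambda>(u,t). D u t)" "u \<in> U"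
  shows "continuous_on {0..1} (D u)"
proof -
  have "continuous_on {0..1} (\<lambda>t. (u, t))" by (intro continuous_intros)
  moreover have "(\<lambda>t. (u, t)) ` {0..1} \<subseteq> U \<times> {0..1}" using assms(2) by auto
  ultimately have "continuous_on {0..1} (\<lambda>t. (\<lambda>(u,t). D u t) (u, t))"
    by (rule continuous_on_compose2[OF assms(1)])
  then show ?thesis by simp
qed

lemma param_deriv:
  fixes D :: "nat \<Rightarrow> real \<Rightarrow> real \<Rightarrow> real"
  assumes "open U" "convex U"
  and der: "\<And>j u t. u \<in> U \<Longrightarrow> t \<in> {0..1} \<Longrightarrow> ((\<lambda>u. D j u t) has_real_derivative D (Suc j) u t) (at u)"
  and cont: "\<And>j. continuous_on (U \<times> {0..1}) (\<lambda>(u,t). D j u t)"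
  and u: "u \<in> U"
  shows "((\<lambda>u. integral {0..1} (D j u)) has_real_derivative integral {0..1} (D (Suc j) u)) (at u)"
proof -
  have "((\<lambda>u. integral (cbox 0 1) (D j u)) has_field_derivative integral (cbox 0 1) (D (Suc j) u)) (at u within U)"
  proof (rule leibniz_rule_field_derivative)
    show "\<And>x t. x \<in> U \<Longrightarrow> t \<in> cbox 0 1 \<Longrightarrow> ((\<lambda>x. D j x t) has_field_derivative D (Suc j) x t) (at x within U)"
      using der by (auto intro: has_field_derivative_at_within)
    show "\<And>x. x \<in> U \<Longrightarrow> D j x integrable_on cbox 0 1"
      using param_cont_slice[OF cont] by (auto intro!: integrable_continuous_interval)
    show "continuous_on (U \<times> cbox 0 1) (\<lambda>(x, t). D (Suc j) x t)" using cont by simp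
  qed (use u assms(2) in auto)
  then show ?thesis using at_within_open[OF u assms(1)] by simp
qed

lemma Ck_param_integral:
  fixes D :: "nat \<Rightarrow> real \<Rightarrow> real \<Rightarrow> real"
  assumes "open U" "convex U"
  and der: "\<And>j u t. u \<in> U \<Longrightarrow> t \<in> {0..1} \<Longrightarrow> ((\<lambda>u. D j u t) has_real_derivative D (Suc j) u t) (at u)"
  and cont: "\<And>j. continuous_on (U \<times> {0..1}) (\<lambda>(u,t). D j u t)"
  shows "Ck k (\<lambda>u. integral {0..1} (D j u)) U"
proof (induction k arbitrary: j)
  case 0
  show ?case
    using param_deriv[of U D, OF assms] by (auto intro!: continuous_at_imp_continuous_on DERIV_isCont)
next
  case (Suc k)
  show ?case
    by (rule Ck_SucI[OF assms(1) param_deriv[of U D, OF assms] Suc.IH])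
qed


lemma powr_shift: "h > 0 \<Longrightarrow> (h::real) powr (E - 1) * h = h powr E"
  using powr_add[of h "E-1" 1] by simp

lemma powr_shift2: "h > 0 \<Longrightarrow> (h::real) powr (E - 2) * h = h powr (E - 1)"
  using powr_shift[of h "E - 1"] by simp

lemma asym_main:
  fixes W f :: "real \<Rightarrow> real" and x0 r E :: real
  assumes r: "r > 0" and W: "Ck 3 W (ball x0 r)"
  and f: "\<And>s. s \<in> {x0 - r<..<x0} \<Longrightarrow> f s = (x0 - s) powr E * W s"
  shows "(\<lambda>s. f s - W x0 * (x0 - s) powr E) \<in> O[at_left x0](\<lambda>s. (x0 - s) powr (E + 1))"
    and "(\<lambda>s. deriv f s - (- E * W x0) * (x0 - s) powr (E - 1)) \<in> O[at_left x0](\<lambda>s. (x0 - s) powr (E - 1 + 1))"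
    and "(\<lambda>s. deriv (deriv f) s - (E * (E - 1) * W x0) * (x0 - s) powr (E - 2)) \<in> O[at_left x0](\<lambda>s. (x0 - s) powr (E - 2 + 1))"
proof -
  define r' where "r' = r / 2"
  define S where "S = {x0 - r'..x0}"
  define W1 where "W1 = deriv W"
  define W2 where "W2 = deriv W1"
  define T where "T = {x0 - r<..<x0}"
  have r': "r' > 0" "r' < r" using r by (auto simp: r'_def)
  have SB: "S \<subseteq> ball x0 r" using r' by (auto simp: S_def dist_real_def)
  have TB: "T \<subseteq> ball x0 r" by (auto simp: T_def dist_real_def)
  have oT: "open T" by (simp add: T_def)
  have dW: "(W has_real_derivative W1 x) (at x)" if "x \<in> ball x0 r" for x
    using Ck_deriv[of 2 W] W that by (simp add: W1_def numeral_3_eq_3)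
  have C2: "Ck 2 W1 (ball x0 r)" using W by (simp add: W1_def numeral_3_eq_3 numeral_2_eq_2)
  have dW1: "(W1 has_real_derivative W2 x) (at x)" if "x \<in> ball x0 r" for x
    using Ck_deriv[of 1 W1] C2 that by (simp add: W2_def numeral_2_eq_2)
  have cW1: "continuous_on (ball x0 r) W1" using Ck_imp_cont[OF C2] .
  have cW2: "continuous_on (ball x0 r) W2"
    using C2 Ck_imp_cont[of 1 W2] by (simp add: W2_def numeral_2_eq_2)
  have cS: "compact S" by (simp add: S_def)
  obtain L0 where L0: "\<And>x. x \<in> S \<Longrightarrow> \<bar>W1 x\<bar> \<le> L0"
    using compact_imp_bounded[OF compact_continuous_image[OF continuous_on_subset[OF cW1 SB] cS]]
    unfolding bounded_iff by auto
  obtain L1 where L1: "\<And>x. x \<in> S \<Longrightarrow> \<bar>W2 x\<bar> \<le> L1"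
    using compact_imp_bounded[OF compact_continuous_image[OF continuous_on_subset[OF cW2 SB] cS]]
    unfolding bounded_iff by auto
  have x0S: "x0 \<in> S" using r' by (simp add: S_def)
  have L0pos: "L0 \<ge> 0" using L0[OF x0S] by simp
  have L1pos: "L1 \<ge> 0" using L1[OF x0S] by simp
  have lip: "\<bar>W s - W x0\<bar> \<le> L0 * (x0 - s)" if s: "s \<in> S" for s
  proof -
    have "norm (W s - W x0) \<le> L0 * norm (s - x0)"
    proof (rule field_differentiable_bound[of S W W1 L0])
      show "convex S" by (simp add: S_def)
      show "(W has_field_derivative W1 z) (at z within S)" if "z \<in> S" for z
      proof -
        have "z \<in> ball x0 r" using SB that by auto
        from dW[OF this] show ?thesis by (rule has_field_derivative_at_within)
      qed
      show "norm (W1 z) \<le> L0" if "z \<in> S" for z using L0 that by simp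
    qed (use s x0S in auto)
    then show ?thesis using s by (simp add: S_def)
  qed
  have ev: "eventually (\<lambda>s. s \<in> {x0 - r'<..<x0}) (at_left x0)"
    using eventually_at_left_real[of "x0 - r'" x0] r' by simp
  have inS: "s \<in> {x0 - r'<..<x0} \<Longrightarrow> s \<in> S" for s by (auto simp: S_def)
  have inT: "s \<in> {x0 - r'<..<x0} \<Longrightarrow> s \<in> T" for s using r' by (auto simp: T_def)
  show "(\<lambda>s. f s - W x0 * (x0 - s) powr E) \<in> O[at_left x0](\<lambda>s. (x0 - s) powr (E + 1))"
  proof (rule bigoI[where c = L0])
    show "\<forall>\<^sub>F s in at_left x0. norm (f s - W x0 * (x0 - s) powr E) \<le> L0 * norm ((x0 - s) powr (E + 1))"
      using ev
    proof eventually_elim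
      case (elim s)
      define h where "h = x0 - s"
      have h: "h > 0" using elim by (simp add: h_def)
      have "f s - W x0 * (x0 - s) powr E = h powr E * (W s - W x0)"
        using f[of s] elim r' by (simp add: h_def algebra_simps)
      then have "norm (f s - W x0 * (x0 - s) powr E) = h powr E * \<bar>W s - W x0\<bar>"
        by (simp add: abs_mult)
      also have "\<dots> \<le> h powr E * (L0 * h)"
        using lip[OF inS[OF elim]] by (intro mult_left_mono) (auto simp: h_def)
      also have "\<dots> = L0 * (h powr (E + 1))" using h by (simp add: powr_add)
      finally show ?case by (simp add: h_def)
    qed
  qed
  define g1 where "g1 s = - E * (x0 - s) powr (E - 1) * W s + (x0 - s) powr E * W1 s" for s
  have dF: "((\<lambda>s. (x0 - s) powr E * W s) has_real_derivative g1 s) (at s)" if "s \<in> T" for s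
  proof -
    have "s \<in> ball x0 r" using that TB by auto
    then have "((\<lambda>s. (x0 - s) powr E * W s) has_real_derivative
       (E * (x0 - s) powr (E - 1) * (0 - 1)) * W s + (x0 - s) powr E * W1 s) (at s)"
      using that dW by (auto intro!: derivative_eq_intros simp: T_def)
    then show ?thesis by (simp add: g1_def)
  qed
  have df: "deriv f s = g1 s" if "s \<in> T" for s
  proof -
    have "(f has_real_derivative g1 s) (at s)"
      using has_field_derivative_transform_within_open[OF dF[OF that] oT that] f by (simp add: T_def)
    then show ?thesis by (rule DERIV_imp_deriv)
  qed
  show "(\<lambda>s. deriv f s - (- E * W x0) * (x0 - s) powr (E - 1)) \<in> O[at_left x0](\<lambda>s. (x0 - s) powr (E - 1 + 1))"
  proof (rule bigoI[where c = "(\<bar>E\<bar> + 1) * L0"])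
    show "\<forall>\<^sub>F s in at_left x0. norm (deriv f s - (- E * W x0) * (x0 - s) powr (E - 1))
          \<le> ((\<bar>E\<bar> + 1) * L0) * norm ((x0 - s) powr (E - 1 + 1))"
      using ev
    proof eventually_elim
      case (elim s)
      define h where "h = x0 - s"
      have h: "h > 0" using elim by (simp add: h_def)
      have hE: "h powr E = h powr (E - 1) * h" using powr_shift[OF h] by simp
      have "deriv f s - (- E * W x0) * (x0 - s) powr (E - 1)
          = h powr (E - 1) * (- E * (W s - W x0)) + h powr E * W1 s"
        using df[OF inT[OF elim]] by (simp add: g1_def h_def algebra_simps)
      then have "norm (deriv f s - (- E * W x0) * (x0 - s) powr (E - 1))
          = \<bar>h powr (E - 1) * (- E * (W s - W x0)) + h powr E * W1 s\<bar>" by simp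
      also have "\<dots> \<le> \<bar>h powr (E - 1) * (- E * (W s - W x0))\<bar> + \<bar>h powr E * W1 s\<bar>"
        by (rule abs_triangle_ineq)
      also have "\<dots> = h powr (E - 1) * (\<bar>E\<bar> * \<bar>W s - W x0\<bar>) + h powr E * \<bar>W1 s\<bar>"
        by (simp add: abs_mult)
      also have "\<dots> \<le> h powr (E - 1) * (\<bar>E\<bar> * (L0 * h)) + h powr E * L0"
        using lip[OF inS[OF elim]] L0[OF inS[OF elim]]
        by (intro add_mono mult_left_mono) (auto simp: h_def)
      also have "\<dots> = ((\<bar>E\<bar> + 1) * L0) * h powr E" using hE by (simp add: algebra_simps)
      finally show ?case by (simp add: h_def)
    qed
  qed
  define g2 where "g2 s = E * (E - 1) * (x0 - s) powr (E - 2) * W s - 2 * E * (x0 - s) powr (E - 1) * W1 s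
      + (x0 - s) powr E * W2 s" for s
  have dg1: "(g1 has_real_derivative g2 s) (at s)" if "s \<in> T" for s
  proof -
    have sb: "s \<in> ball x0 r" using that TB by auto
    have "(g1 has_real_derivative
       (- E * ((E - 1) * (x0 - s) powr (E - 1 - 1) * (0 - 1))) * W s + (- E * (x0 - s) powr (E - 1)) * W1 s
       + ((E * (x0 - s) powr (E - 1) * (0 - 1)) * W1 s + (x0 - s) powr E * W2 s)) (at s)"
      unfolding g1_def[abs_def] using that dW[OF sb] dW1[OF sb]
      by (auto intro!: derivative_eq_intros simp: T_def)
    moreover have "E - 1 - 1 = E - 2" by simp
    ultimately show ?thesis by (simp add: g2_def algebra_simps)
  qed
  have ddf: "deriv (deriv f) s = g2 s" if "s \<in> T" for s
  proof -
    have "(deriv f has_real_derivative g2 s) (at s)"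
      using has_field_derivative_transform_within_open[OF dg1[OF that] oT that] df by simp
    then show ?thesis by (rule DERIV_imp_deriv)
  qed
  show "(\<lambda>s. deriv (deriv f) s - (E * (E - 1) * W x0) * (x0 - s) powr (E - 2)) \<in> O[at_left x0](\<lambda>s. (x0 - s) powr (E - 2 + 1))"
  proof (rule bigoI[where c = "\<bar>E * (E - 1)\<bar> * L0 + 2 * \<bar>E\<bar> * L0 + r' * L1"])
    show "\<forall>\<^sub>F s in at_left x0. norm (deriv (deriv f) s - (E * (E - 1) * W x0) * (x0 - s) powr (E - 2))
          \<le> (\<bar>E * (E - 1)\<bar> * L0 + 2 * \<bar>E\<bar> * L0 + r' * L1) * norm ((x0 - s) powr (E - 2 + 1))"
      using ev
    proof eventually_elim
      case (elim s)
      define h where "h = x0 - s"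
      have h: "h > 0" "h \<le> r'" using elim by (auto simp: h_def)
      have hE1: "h powr (E - 1) = h powr (E - 2) * h" using powr_shift2[OF h(1)] by simp
      have hE: "h powr E = h powr (E - 1) * h" using powr_shift[OF h(1)] by simp
      have a: "\<bar>W s - W x0\<bar> \<le> L0 * h" using lip[OF inS[OF elim]] by (simp add: h_def)
      have b: "\<bar>W1 s\<bar> \<le> L0" using L0[OF inS[OF elim]] .
      have c: "\<bar>W2 s\<bar> \<le> L1" using L1[OF inS[OF elim]] .
      have p0: "h powr (E - 2) \<ge> 0" "h powr (E - 1) \<ge> 0" "h powr E \<ge> 0" by auto
      have "deriv (deriv f) s - (E * (E - 1) * W x0) * (x0 - s) powr (E - 2)
          = h powr (E - 2) * (E * (E - 1) * (W s - W x0)) - h powr (E - 1) * (2 * E * W1 s) + h powr E * W2 s"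
        using ddf[OF inT[OF elim]] by (simp add: g2_def h_def algebra_simps)
      then have "norm (deriv (deriv f) s - (E * (E - 1) * W x0) * (x0 - s) powr (E - 2))
          = \<bar>h powr (E - 2) * (E * (E - 1) * (W s - W x0)) - h powr (E - 1) * (2 * E * W1 s) + h powr E * W2 s\<bar>"
        by simp
      also have "\<dots> \<le> \<bar>h powr (E - 2) * (E * (E - 1) * (W s - W x0)) - h powr (E - 1) * (2 * E * W1 s)\<bar> + \<bar>h powr E * W2 s\<bar>"
        by (rule abs_triangle_ineq)
      also have "\<dots> \<le> \<bar>h powr (E - 2) * (E * (E - 1) * (W s - W x0))\<bar> + \<bar>h powr (E - 1) * (2 * E * W1 s)\<bar> + \<bar>h powr E * W2 s\<bar>"
        by (intro add_mono abs_triangle_ineq4 order.refl)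
      also have "\<dots> = h powr (E - 2) * (\<bar>E * (E - 1)\<bar> * \<bar>W s - W x0\<bar>) + h powr (E - 1) * (2 * \<bar>E\<bar> * \<bar>W1 s\<bar>)
             + h powr E * \<bar>W2 s\<bar>"
        by (simp add: abs_mult)
      also have "\<dots> \<le> h powr (E - 2) * (\<bar>E * (E - 1)\<bar> * (L0 * h)) + h powr (E - 1) * (2 * \<bar>E\<bar> * L0)
             + h powr E * L1"
        using a b c p0 by (intro add_mono mult_left_mono) auto
      also have "\<dots> = h powr (E - 1) * (\<bar>E * (E - 1)\<bar> * L0 + 2 * \<bar>E\<bar> * L0 + h * L1)"
        using hE1 hE by (simp add: algebra_simps)
      also have "\<dots> \<le> h powr (E - 1) * (\<bar>E * (E - 1)\<bar> * L0 + 2 * \<bar>E\<bar> * L0 + r' * L1)"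
        using h L1pos p0 by (intro mult_left_mono add_mono) (auto intro: mult_right_mono)
      finally show ?case by (simp add: h_def algebra_simps)
    qed
  qed
qed


locale pctx =
  fixes p :: real
  assumes p1: "p > 1"
begin

definition Bq :: "real \<Rightarrow> real" where
  "Bq t = (if t = 0 then p + 1 else (1 - (1 - t\<^sup>2) powr (p + 1)) / t\<^sup>2)"

definition Aq :: "real \<Rightarrow> real" where "Aq t = 2 - t\<^sup>2"

lemma Bq_cont_pos: "continuous_on {0<..1} Bq"
proof -
  have c1: "continuous_on {0<..1} (\<lambda>t::real. (1 - t\<^sup>2) powr (p + 1))"
    by (rule continuous_on_powr') (use p1 in \<open>auto intro!: continuous_intros simp: power_le_one\<close>)
  have "continuous_on {0<..1} (\<lambda>t. (1 - (1 - t\<^sup>2) powr (p + 1)) / t\<^sup>2)"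
    by (intro continuous_intros c1) auto
  then show ?thesis by (rule continuous_on_eq) (auto simp: Bq_def)
qed

lemma Bq_lim0: "(Bq \<longlongrightarrow> p + 1) (at 0 within {0..1})"
proof -
  have d: "((\<lambda>y. y powr (p+1)) has_real_derivative (p+1) * 1 powr (p + 1 - 1)) (at 1)"
    by (rule has_real_derivative_powr) simp
  then have "((\<lambda>y. (y powr (p+1) - 1 powr (p+1)) / (y - 1)) \<longlongrightarrow> (p+1)) (at 1)"
    unfolding has_field_derivative_iff by simp
  moreover have "filterlim (\<lambda>t. 1 - t\<^sup>2) (at 1) (at 0 within {0..1::real})"
  proof (rule filterlim_atI)
    show "((\<lambda>t. 1 - t\<^sup>2) \<longlongrightarrow> 1) (at 0 within {0..1::real})"
      by (auto intro!: tendsto_eq_intros)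
    show "\<forall>\<^sub>F x in at 0 within {0..1::real}. 1 - x\<^sup>2 \<noteq> 1"
      by (auto simp: eventually_at_filter)
  qed
  ultimately have "((\<lambda>t. ((1 - t\<^sup>2) powr (p+1) - 1 powr (p+1)) / ((1 - t\<^sup>2) - 1)) \<longlongrightarrow> (p+1)) (at 0 within {0..1::real})"
    by (rule filterlim_compose)
  then show ?thesis
  proof (rule tendsto_cong[THEN iffD1, rotated])
    show "\<forall>\<^sub>F x in at 0 within {0..1}. ((1 - x\<^sup>2) powr (p + 1) - 1 powr (p + 1)) / (1 - x\<^sup>2 - 1) = Bq x"
      by (auto simp: eventually_at_filter Bq_def field_simps)
  qed
qed

lemma Bq_cont: "continuous_on {0..1} Bq"
  unfolding continuous_on_def
proof
  fix x :: real assume x: "x \<in> {0..1}"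
  show "(Bq \<longlongrightarrow> Bq x) (at x within {0..1})"
  proof (cases "x = 0")
    case True
    then show ?thesis using Bq_lim0 by (simp add: Bq_def)
  next
    case False
    then have x0: "x \<in> {0<..1}" using x by auto
    have "(Bq \<longlongrightarrow> Bq x) (at x within {0<..1})"
      using Bq_cont_pos x0 unfolding continuous_on_def by blast
    moreover have "at x within {0..1} = at x within {0<..1}"
      by (rule at_within_nhd[of _ "{0<..}"]) (use x0 in auto)
    ultimately show ?thesis by simp
  qed
qed

lemma Bq_pos: "t \<in> {0..1} \<Longrightarrow> Bq t > 0"
proof -
  assume t: "t \<in> {0..1}"
  show ?thesis
  proof (cases "t = 0")
    case True then show ?thesis using p1 by (simp add: Bq_def)
  next
    case False
    then have t2: "0 < t\<^sup>2" "t\<^sup>2 \<le> 1" using t by (auto simp: power_le_one)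
    have "(1 - t\<^sup>2) powr (p + 1) < 1"
    proof (cases "1 - t\<^sup>2 = 0")
      case True then show ?thesis by simp
    next
      case False
      then have "(1 - t\<^sup>2) powr (p + 1) < 1 powr (p+1)"
        using t2 p1 by (intro powr_less_mono2) auto
      then show ?thesis by simp
    qed
    then show ?thesis using False t2 by (simp add: Bq_def)
  qed
qed

definition bm where "bm = Inf (Bq ` {0..1})"
definition bM where "bM = Sup (Bq ` {0..1})"

lemma Bq_bdd: "bounded (Bq ` {0..1})"
  using compact_continuous_image[OF Bq_cont] compact_imp_bounded by blast

lemma Bq_bounds: "t \<in> {0..1} \<Longrightarrow> bm \<le> Bq t \<and> Bq t \<le> bM"
  unfolding bm_def bM_def
  using Bq_bdd by (auto intro!: cInf_lower cSup_upper bounded_imp_bdd_below bounded_imp_bdd_above)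

lemma bm_pos: "bm > 0"
proof -
  obtain x where x: "x \<in> {0..1}" "\<forall>y\<in>{0..1}. Bq x \<le> Bq y"
    using continuous_attains_inf[OF _ _ Bq_cont] by auto
  have "Bq x \<le> bm" unfolding bm_def using x by (auto intro!: cInf_greatest)
  then show ?thesis using Bq_pos[OF x(1)] by simp
qed

lemma bM_pos: "bM > 0"
  using Bq_bounds[of 0] bm_pos by simp

definition dl where "dl = 1 / (2 * bM)"
definition U where "U = {-dl<..}"

lemma dl_pos: "dl > 0" using bM_pos by (simp add: dl_def)

lemma U_open: "open U" and U_convex: "convex U" and zero_U: "0 \<in> U"
  using dl_pos by (auto simp: U_def)

lemma Aq_ge: "t \<in> {0..1} \<Longrightarrow> 1 \<le> Aq t \<and> Aq t \<le> 2"
  by (auto simp: Aq_def power_le_one)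

lemma AB_pos: assumes "u \<in> U" "t \<in> {0..1}" shows "Aq t + u * Bq t \<ge> 1/2"
proof (cases "u \<ge> 0")
  case True
  then show ?thesis using Aq_ge[OF assms(2)] Bq_pos[OF assms(2)] mult_nonneg_nonneg[of u "Bq t"] by linarith
next
  case False
  have "u * bM \<le> u * Bq t" using False Bq_bounds[OF assms(2)] by (simp add: mult_left_mono_neg)
  moreover have "- dl * bM = - 1/2" using bM_pos by (simp add: dl_def)
  moreover have "- dl * bM < u * bM" using assms(1) bM_pos mult_strict_right_mono[of "-dl" u bM] by (simp add: U_def)
  ultimately show ?thesis using Aq_ge[OF assms(2)] by linarith
qed

definition cf :: "nat \<Rightarrow> real" where "cf j = (\<Prod>i<j. (-1/2 - real i))"

definition D :: "nat \<Rightarrow> real \<Rightarrow> real \<Rightarrow> real" where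
  "D j u t = cf j * Bq t ^ j * (Aq t + u * Bq t) powr (-1/2 - real j)"

lemma D_der: assumes "u \<in> U" "t \<in> {0..1}"
  shows "((\<lambda>u. D j u t) has_real_derivative D (Suc j) u t) (at u)"
proof -
  have pos: "Aq t + u * Bq t > 0" using AB_pos[OF assms] by simp
  have "((\<lambda>u. cf j * Bq t ^ j * (Aq t + u * Bq t) powr (-1/2 - real j)) has_real_derivative
     cf j * Bq t ^ j * ((-1/2 - real j) * (Aq t + u * Bq t) powr (-1/2 - real j - 1) * Bq t)) (at u)"
    using pos by (auto intro!: derivative_eq_intros)
  moreover have "cf j * Bq t ^ j * ((-1/2 - real j) * (Aq t + u * Bq t) powr (-1/2 - real j - 1) * Bq t)
      = D (Suc j) u t"
    by (simp add: D_def cf_def algebra_simps)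
  ultimately have "((\<lambda>u. cf j * Bq t ^ j * (Aq t + u * Bq t) powr (-1/2 - real j)) has_real_derivative
     D (Suc j) u t) (at u)" by metis
  then show ?thesis by (simp only: D_def[of j])
qed

lemma D_cont: "continuous_on (U \<times> {0..1}) (\<lambda>(u,t). D j u t)"
proof -
  have cB: "continuous_on (U \<times> {0..1}) (\<lambda>x. Bq (snd x))"
    by (rule continuous_on_compose2[OF Bq_cont continuous_on_snd]) auto
  have cA: "continuous_on (U \<times> {0..1}) (\<lambda>x. Aq (snd x))"
    unfolding Aq_def by (intro continuous_intros)
  have "continuous_on (U \<times> {0..1}) (\<lambda>x. cf j * Bq (snd x) ^ j * (Aq (snd x) + fst x * Bq (snd x)) powr (-1/2 - real j))"
  proof -
    have pos: "\<forall>x\<in>U \<times> {0..1}. Aq (snd x) + fst x * Bq (snd x) \<noteq> 0"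
      using AB_pos by fastforce
    show ?thesis by (intro continuous_intros cA cB pos)
  qed
  then show ?thesis by (simp add: D_def case_prod_beta')
qed

definition Fq :: "real \<Rightarrow> real" where "Fq u = 8 * integral {0..1} (D 0 u)"

lemma Fq_Ck: "Ck k Fq U"
proof -
  have "Ck k (\<lambda>u. integral {0..1} (D 0 u)) U"
    by (rule Ck_param_integral[of U D, OF U_open U_convex D_der D_cont])
  then have "Ck k (\<lambda>u. 8 * integral {0..1} (D 0 u)) U" by (rule Ck_cmult[OF U_open])
  then show ?thesis by (simp add: Fq_def[abs_def])
qed

lemma Fq_deriv: "u \<in> U \<Longrightarrow> (Fq has_real_derivative 8 * integral {0..1} (D 1 u)) (at u)"
proof -
  assume u: "u \<in> U"
  have "((\<lambda>u. integral {0..1} (D 0 u)) has_real_derivative integral {0..1} (D (Suc 0) u)) (at u)"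
    by (rule param_deriv[of U D, OF U_open U_convex D_der D_cont u])
  from DERIV_cmult[OF this, of 8] show ?thesis by (simp add: Fq_def[abs_def])
qed

lemma D_int: "u \<in> U \<Longrightarrow> D j u integrable_on {0..1}"
  using param_cont_slice[OF D_cont] by (auto intro!: integrable_continuous_interval)

lemma Fq_deriv_neg: assumes "u \<in> U" shows "integral {0..1} (D 1 u) < 0"
proof -
  have c: "continuous_on {0..1} (D 1 u)" using param_cont_slice[OF D_cont assms] .
  obtain x where x: "x \<in> {0..1}" "\<forall>y\<in>{0..1}. D 1 u y \<le> D 1 u x"
    using continuous_attains_sup[OF _ _ c] by auto
  have neg: "D 1 u x < 0"
    using AB_pos[OF assms x(1)] Bq_pos[OF x(1)] by (simp add: D_def cf_def mult_neg_pos)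
  have "integral {0..1} (D 1 u) \<le> integral {0..1} (\<lambda>_::real. D 1 u x)"
    using x by (intro integral_le D_int assms) auto
  then show ?thesis using neg by simp
qed

lemma D0: "D 0 u t = (Aq t + u * Bq t) powr (-1/2)"
  by (simp add: D_def cf_def)

end


context pctx begin

lemma int_Aq: "((\<lambda>t. (Aq t) powr (-1/2)) has_integral pi/4) {0..1}"
proof -
  define f where "f t = arcsin (t / sqrt 2)" for t :: real
  have der: "(f has_real_derivative (Aq t) powr (-1/2)) (at t within {0..1})" if t: "t \<in> {0..1}" for t
  proof -
    have s2: "sqrt 2 > (1::real)" by simp
    have "0 \<le> t" "t \<le> 1" using t by auto
    then have "t < sqrt 2" "- sqrt 2 < t" using s2 by linarith+
    then have tb: "- 1 < t / sqrt 2" "t / sqrt 2 < 1" by (auto simp: field_simps)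
    have "(f has_real_derivative inverse (sqrt (1 - (t / sqrt 2)\<^sup>2)) * (1 / sqrt 2)) (at t)"
      unfolding f_def[abs_def]
      by (rule DERIV_chain2[of arcsin _ "\<lambda>t. t / sqrt 2", OF DERIV_arcsin[OF tb]]) (auto intro!: derivative_eq_intros simp: real_div_sqrt)
    moreover have "inverse (sqrt (1 - (t / sqrt 2)\<^sup>2)) * (1 / sqrt 2) = (Aq t) powr (-1/2)"
    proof -
      have a: "Aq t > 0" using Aq_ge[OF t] by simp
      have "sqrt (1 - (t / sqrt 2)\<^sup>2) * sqrt 2 = sqrt (Aq t)"
        by (simp add: real_sqrt_mult[symmetric] power_divide Aq_def algebra_simps)
      moreover have "(Aq t) powr (-1/2) = 1 / sqrt (Aq t)"
        using a by (simp add: powr_minus_divide powr_half_sqrt[symmetric])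
      ultimately show ?thesis by (simp add: field_simps)
    qed
    ultimately show ?thesis by (auto intro: has_field_derivative_at_within)
  qed
  have "((\<lambda>t. (Aq t) powr (-1/2)) has_integral f 1 - f 0) {0..1}"
    by (rule fundamental_theorem_of_calculus)
       (use der in \<open>auto simp: has_real_derivative_iff_has_vector_derivative[symmetric]\<close>)
  moreover have "f 1 = pi/4"
  proof -
    have "1 / sqrt 2 = sin (pi/4)" by (simp add: sin_45 real_div_sqrt)
    then show ?thesis unfolding f_def using arcsin_sin[of "pi/4"] pi_gt_zero by simp
  qed
  moreover have "f 0 = 0" by (simp add: f_def)
  ultimately show ?thesis by simp
qed

lemma Fq0: "Fq 0 = 2 * pi"
proof -
  have "D 0 0 = (\<lambda>t. (Aq t) powr (-1/2))" by (simp add: D0[abs_def])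
  then show ?thesis using integral_unique[OF int_Aq] by (simp add: Fq_def)
qed


lemma Fq_has_deriv: "u \<in> U \<Longrightarrow> \<exists>y. (Fq has_real_derivative y) (at u) \<and> y < 0"
  using Fq_deriv Fq_deriv_neg by fastforce

lemma Fq_strict_dec: assumes "u \<in> U" "v \<in> U" "u < v" shows "Fq v < Fq u"
proof (rule DERIV_neg_imp_decreasing[OF assms(3)])
  fix x assume "u \<le> x" "x \<le> v"
  then show "\<exists>y. (Fq has_real_derivative y) (at x) \<and> y < 0"
    using assms by (intro Fq_has_deriv) (auto simp: U_def)
qed

lemma Fq_cont: "continuous_on U Fq"
  using Ck_imp_cont[OF Fq_Ck[of 0]] .

lemma Fq_nonneg: assumes "u \<in> U" shows "Fq u \<ge> 0"
proof -
  have "integral {0..1} (D 0 u) \<ge> 0"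
    by (rule integral_nonneg[OF D_int[OF assms]]) (simp add: D0)
  then show ?thesis by (simp add: Fq_def)
qed

lemma Fq_pos: assumes "u \<ge> 0" shows "Fq u > 0"
proof -
  have "Fq (u+1) < Fq u" using assms dl_pos by (intro Fq_strict_dec) (auto simp: U_def)
  moreover have "Fq (u+1) \<ge> 0" using assms dl_pos by (intro Fq_nonneg) (auto simp: U_def)
  ultimately show ?thesis by simp
qed

lemma Fq_le: assumes "u \<ge> 0" shows "Fq u \<le> 2*pi"
proof (cases "u = 0")
  case True then show ?thesis using Fq0 by simp
next
  case False
  then show ?thesis using Fq_strict_dec[of 0 u] Fq0 assms zero_U dl_pos by (simp add: U_def)
qed

lemma Fq_upper: assumes "u > 0" shows "Fq u \<le> 8 * (1 / sqrt (u * bm))"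
proof -
  have uU: "u \<in> U" using assms dl_pos by (simp add: U_def)
  have "integral {0..1} (D 0 u) \<le> integral {0..1} (\<lambda>_::real. 1 / sqrt (u * bm))"
  proof (rule integral_le[OF D_int[OF uU] integrable_const_ivl])
    fix t :: real assume t: "t \<in> {0..1}"
    have ub: "u * bm \<le> u * Bq t" using Bq_bounds[OF t] assms by simp
    have ub2: "u * Bq t \<le> Aq t + u * Bq t" using Aq_ge[OF t] by simp
    have pos: "0 < u * bm" using assms bm_pos by simp
    have "(Aq t + u * Bq t) powr (-1/2) \<le> (u * bm) powr (-1/2)"
      by (rule powr_mono2') (use ub ub2 pos in auto)
    also have "\<dots> = 1 / sqrt (u * bm)"
      using pos by (simp add: powr_minus_divide powr_half_sqrt[symmetric])
    finally show "D 0 u t \<le> 1 / sqrt (u * bm)" by (simp add: D0)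
  qed
  then show ?thesis by (simp add: Fq_def)
qed

lemma Fq_image: "Fq ` {0..} = {0<..2*pi}"
proof
  show "Fq ` {0..} \<subseteq> {0<..2*pi}" using Fq_pos Fq_le by auto
next
  show "{0<..2*pi} \<subseteq> Fq ` {0..}"
  proof
    fix s assume s: "s \<in> {0<..2*pi}"
    define u0 where "u0 = 256 / (bm * s\<^sup>2)"
    have u0: "u0 > 0" using s bm_pos by (simp add: u0_def)
    have "u0 * bm = (16 / s)\<^sup>2" using bm_pos s by (simp add: u0_def field_simps power2_eq_square)
    then have "sqrt (u0 * bm) = 16 / s" using s by simp
    then have "Fq u0 \<le> s / 2" using Fq_upper[OF u0] s by simp
    then have a: "Fq u0 \<le> s" using s by simp
    have b: "s \<le> Fq 0" using s Fq0 by simp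
    have c: "continuous_on {0..u0} Fq"
      by (rule continuous_on_subset[OF Fq_cont]) (use dl_pos in \<open>auto simp: U_def\<close>)
    obtain x where "0 \<le> x" "x \<le> u0" "Fq x = s"
      using IVT2'[of Fq u0 s 0, OF a b _ c] u0 by auto
    then show "s \<in> Fq ` {0..}" by auto
  qed
qed

lemma Fq_inj: "inj_on Fq {0..}"
proof (rule inj_onI)
  fix x y :: real assume "x \<in> {0..}" "y \<in> {0..}" "Fq x = Fq y"
  moreover have "x \<in> {0..} \<Longrightarrow> x \<in> U" for x using dl_pos by (auto simp: U_def)
  ultimately show "x = y" using Fq_strict_dec
    by (metis linorder_neqE_linordered_idom order_less_irrefl)
qed

end


context pctx begin

definition fz :: "real \<Rightarrow> real \<Rightarrow> real" where
  "fz u z = (1 - z\<^sup>2 + u * (1 - z powr (p + 1))) powr (-1/2)"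

lemma fz_nonneg: "fz u z \<ge> 0" by (simp add: fz_def)

lemma zpow_le1: "z \<in> {0..1} \<Longrightarrow> z powr (p+1) \<le> 1"
  using p1 by (intro powr_le1) auto

lemma fz_cont: assumes "u \<ge> 0" "b < 1" shows "continuous_on {0..b} (fz u)"
proof -
  have c1: "continuous_on {0..b} (\<lambda>z::real. z powr (p + 1))"
    by (rule continuous_on_powr') (use p1 in \<open>auto intro!: continuous_intros\<close>)
  have pos: "\<forall>z\<in>{0..b}. 1 - z\<^sup>2 + u * (1 - z powr (p + 1)) \<noteq> 0"
  proof
    fix z assume z: "z \<in> {0..b}"
    then have "z < 1" "0 \<le> z" using assms by auto
    then have "z\<^sup>2 < 1" by (simp add: power_less_one_iff abs_less_iff) 
    moreover have "u * (1 - z powr (p + 1)) \<ge> 0" using zpow_le1[of z] \<open>z < 1\<close> \<open>0 \<le> z\<close> assms by simp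
    ultimately show "1 - z\<^sup>2 + u * (1 - z powr (p + 1)) \<noteq> 0" by linarith
  qed
  show ?thesis unfolding fz_def[abs_def]
    by (intro continuous_intros c1 pos)
qed

lemma fz_subst_pt: assumes "u \<ge> 0" "x \<in> {0<..1}"
  shows "2 * x * fz u (1 - x\<^sup>2) = 2 * D 0 u x"
proof -
  have x0: "x > 0" "x \<noteq> 0" using assms by auto
  have xt: "x \<in> {0..1}" using assms by auto
  have Y: "Aq x + u * Bq x > 0" using AB_pos[of u x] xt assms dl_pos by (simp add: U_def)
  have b1: "1 - (1 - x\<^sup>2)\<^sup>2 = x\<^sup>2 * Aq x" by (simp add: Aq_def power2_eq_square algebra_simps)
  have b2: "1 - (1 - x\<^sup>2) powr (p+1) = x\<^sup>2 * Bq x" using x0 by (simp add: Bq_def field_simps)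
  have "1 - (1 - x\<^sup>2)\<^sup>2 + u * (1 - (1 - x\<^sup>2) powr (p + 1)) = x\<^sup>2 * (Aq x + u * Bq x)"
    unfolding b1 b2 by (simp add: algebra_simps)
  then have "fz u (1 - x\<^sup>2) = (x\<^sup>2) powr (-1/2) * (Aq x + u * Bq x) powr (-1/2)"
    using Y by (simp add: fz_def powr_mult)
  moreover have "(x\<^sup>2) powr (-1/2) = 1 / x"
    using x0 by (simp add: powr_minus_divide powr_half_sqrt[symmetric])
  ultimately show ?thesis using x0 by (simp add: D0)
qed

definition Kz where "Kz u t = 2 * D 0 u t"

lemma Kz_int: "u \<ge> 0 \<Longrightarrow> Kz u integrable_on {a..b}" if "{a..b} \<subseteq> {0..1}"
proof -
  assume u: "u \<ge> 0"
  have "u \<in> U" using u dl_pos by (simp add: U_def)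
  then have "continuous_on {0..1} (Kz u)"
    unfolding Kz_def[abs_def] by (intro continuous_intros param_cont_slice[OF D_cont])
  then show ?thesis using that by (auto intro!: integrable_continuous_interval intro: continuous_on_subset)
qed

lemma Kz_bounds: "u \<ge> 0 \<Longrightarrow> t \<in> {0..1} \<Longrightarrow> 0 \<le> Kz u t \<and> Kz u t \<le> 2"
proof -
  assume u: "u \<ge> 0" and t: "t \<in> {0..1}"
  have "1 \<le> Aq t + u * Bq t" using Aq_ge[OF t] Bq_pos[OF t] u by (simp add: add_increasing2)
  then have "(Aq t + u * Bq t) powr (-1/2) \<le> 1 powr (-1/2)"
    by (intro powr_mono2') auto
  then show ?thesis by (simp add: Kz_def D0)
qed

lemma subst_trunc: assumes u: "u \<ge> 0" and b: "0 \<le> b" "b < 1"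
  shows "(fz u has_integral integral {sqrt (1 - b)..1} (Kz u)) {0..b}"
proof -
  define a where "a = sqrt (1 - b)"
  have a: "0 < a" "a \<le> 1" using b by (auto simp: a_def)
  have "((\<lambda>x. (-2 * x) *\<^sub>R fz u (1 - x\<^sup>2)) has_integral
      (integral {1 - a\<^sup>2..1 - 1\<^sup>2} (fz u) - integral {1 - 1\<^sup>2..1 - a\<^sup>2} (fz u))) {a..1}"
  proof (rule has_integral_substitution_general[of "{}" a 1 "\<lambda>x. 1 - x\<^sup>2" 0 b])
    show "(\<lambda>x. 1 - x\<^sup>2) ` {a..1} \<subseteq> {0..b}"
    proof
      fix y assume "y \<in> (\<lambda>x. 1 - x\<^sup>2) ` {a..1}"
      then obtain x where x: "a \<le> x" "x \<le> 1" "y = 1 - x\<^sup>2" by auto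
      have "a\<^sup>2 \<le> x\<^sup>2" using x a by (intro power_mono) auto
      moreover have "a\<^sup>2 = 1 - b" using b by (simp add: a_def)
      moreover have "x\<^sup>2 \<le> 1" using x a by (simp add: power_le_one)
      ultimately show "y \<in> {0..b}" using x by auto
    qed
    show "continuous_on {0..b} (fz u)" by (rule fz_cont[OF u b(2)])
  next
    show "continuous_on {a..1} (\<lambda>x. 1 - x\<^sup>2)" by (intro continuous_intros)
  next
    fix x assume "x \<in> {a..1} - {}"
    show "((\<lambda>x. 1 - x\<^sup>2) has_real_derivative -2 * x) (at x within {a..1})"
      by (auto intro!: derivative_eq_intros)
  qed (use a in auto)
  moreover have "1 - a\<^sup>2 = b" using b by (simp add: a_def)
  ultimately have h: "((\<lambda>x. (-2 * x) *\<^sub>R fz u (1 - x\<^sup>2)) has_integral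
      (integral {b..0} (fz u) - integral {0..b} (fz u))) {a..1}" by simp
  have "integral {b..0} (fz u) = 0"
  proof (cases "b = 0")
    case True then show ?thesis by simp
  next
    case False then show ?thesis using b by (simp add: integral_empty)
  qed
  have eq: "(-2 * x) *\<^sub>R fz u (1 - x\<^sup>2) = - Kz u x" if x: "x \<in> {a..1}" for x
  proof -
    have "x \<in> {0<..1}" using a x by auto
    from fz_subst_pt[OF u this] show ?thesis by (simp add: Kz_def)
  qed
  have h2: "((\<lambda>x. (-2 * x) *\<^sub>R fz u (1 - x\<^sup>2)) has_integral (- integral {0..b} (fz u))) {a..1}"
    using h \<open>integral {b..0} (fz u) = 0\<close> by simp
  have "((\<lambda>x. - Kz u x) has_integral (- integral {0..b} (fz u))) {a..1}"
    by (rule has_integral_cong[THEN iffD1, OF eq h2])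
  from has_integral_neg[OF this] have "(Kz u has_integral integral {0..b} (fz u)) {a..1}"
    by simp
  then have "integral {a..1} (Kz u) = integral {0..b} (fz u)" by (rule integral_unique)
  moreover have "fz u integrable_on {0..b}"
    by (rule integrable_continuous_interval[OF fz_cont[OF u b(2)]])
  ultimately show ?thesis by (simp add: a_def integrable_integral)
qed


lemma fz_integral: assumes u: "u \<ge> 0" shows "(fz u has_integral Fq u / 4) {0..1}"
proof -
  define bk where "bk k = 1 - 1 / (real k + 2)" for k
  define sk where "sk k = sqrt (1 - bk k)" for k
  define Ik where "Ik k = integral {sk k..1} (Kz u)" for k
  define fk where "fk k z = (if z \<in> {0..bk k} then fz u z else 0)" for k z
  have bk: "0 \<le> bk k" "bk k < 1" for k by (auto simp: bk_def field_simps)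
  have bk_mono: "bk k \<le> bk (Suc k)" for k by (auto simp: bk_def field_simps)
  have sk: "0 < sk k" "sk k \<le> 1" for k using bk[of k] by (auto simp: sk_def)
  have fk_int: "(fk k has_integral Ik k) {0..1}" for k
  proof -
    have "(fz u has_integral Ik k) (cbox 0 (bk k))"
      using subst_trunc[OF u bk[of k]] by (simp add: Ik_def sk_def)
    from has_integral_restrict_closed_subinterval[OF this, of 0 1] show ?thesis
      using bk[of k] by (simp add: fk_def[abs_def])
  qed
  have Kint: "Kz u integrable_on {0..1}" by (rule Kz_int[OF _ u]) simp
  have Ik_bd: "0 \<le> Ik k \<and> Ik k \<le> 2" for k
  proof -
    have ki: "Kz u integrable_on {sk k..1}" by (rule Kz_int[OF _ u]) (use sk[of k] in auto)
    have "0 \<le> Ik k" unfolding Ik_def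
      by (rule integral_nonneg[OF ki]) (use Kz_bounds[OF u] sk[of k] in force)
    moreover have "Ik k \<le> integral {sk k..1} (\<lambda>_::real. 2::real)" unfolding Ik_def
      by (rule integral_le[OF ki integrable_const_ivl]) (use Kz_bounds[OF u] sk[of k] in force)
    moreover have "integral {sk k..1} (\<lambda>_::real. 2::real) \<le> 2" using sk[of k] by simp
    ultimately show ?thesis by linarith
  qed
  have mc: "fz u integrable_on {0..1} \<and> ((\<lambda>k. integral {0..1} (fk k)) \<longlongrightarrow> integral {0..1} (fz u)) sequentially"
  proof (rule monotone_convergence_increasing)
    show "fk k integrable_on {0..1}" for k using fk_int by blast
    show "fk k x \<le> fk (Suc k) x" if "x \<in> {0..1}" for k x
      using bk_mono[of k] fz_nonneg[of u x] by (auto simp: fk_def)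
    show "(\<lambda>k. fk k x) \<longlonglongrightarrow> fz u x" if x: "x \<in> {0..1}" for x
    proof (cases "x = 1")
      case True
      have "fk k x = 0" for k using bk[of k] True by (simp add: fk_def)
      moreover have "fz u x = 0" using True by (simp add: fz_def)
      ultimately show ?thesis by simp
    next
      case False
      then have x1: "x < 1" "0 \<le> x" using x by auto
      obtain N :: nat where N: "1 / (1 - x) < real N" using reals_Archimedean2 by blast
      have "fk k x = fz u x" if "k \<ge> N" for k
      proof -
        have "1 / (1 - x) < real k + 2" using N that by simp
        then have "1 / (real k + 2) < 1 - x" using x1
          by (simp add: field_simps)
        then have "x \<le> bk k" by (simp add: bk_def)
        then show ?thesis using x1 by (simp add: fk_def)
      qed
      then show ?thesis by (intro tendsto_eventually) (auto simp: eventually_sequentially)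
    qed
    show "bounded (range (\<lambda>k. integral {0..1} (fk k)))"
      unfolding bounded_iff using Ik_bd fk_int[THEN integral_unique] by (intro exI[of _ 2]) auto
  qed
  have lim1: "Ik \<longlonglongrightarrow> integral {0..1} (fz u)"
    using mc fk_int[THEN integral_unique] by simp
  have lim2: "Ik \<longlonglongrightarrow> integral {0..1} (Kz u)"
  proof -
    have comb: "Ik k = integral {0..1} (Kz u) - integral {0..sk k} (Kz u)" for k
      using Henstock_Kurzweil_Integration.integral_combine[OF _ _ Kint, of "sk k"] sk[of k] by (simp add: Ik_def)
    have "(\<lambda>k. 1 / real (Suc (Suc k))) \<longlonglongrightarrow> 0"
      by (intro LIMSEQ_Suc lim_const_over_n)
    moreover have "1 - bk k = 1 / real (Suc (Suc k))" for k by (simp add: bk_def add.commute)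
    ultimately have "(\<lambda>k. 1 - bk k) \<longlonglongrightarrow> 0" by simp
    then have "(\<lambda>k. sqrt (1 - bk k)) \<longlonglongrightarrow> sqrt 0" by (rule tendsto_real_sqrt)
    then have "(\<lambda>k. 2 * sk k) \<longlonglongrightarrow> 2 * 0"
      unfolding sk_def by (intro tendsto_mult tendsto_const) simp
    moreover have "norm (integral {0..sk k} (Kz u)) \<le> 2 * sk k" for k
    proof -
      have ki: "Kz u integrable_on {0..sk k}" by (rule Kz_int[OF _ u]) (use sk[of k] in auto)
      have "0 \<le> integral {0..sk k} (Kz u)"
        by (rule integral_nonneg[OF ki]) (use Kz_bounds[OF u] sk[of k] in force)
      moreover have "integral {0..sk k} (Kz u) \<le> integral {0..sk k} (\<lambda>_::real. 2::real)"
        by (rule integral_le[OF ki integrable_const_ivl]) (use Kz_bounds[OF u] sk[of k] in force)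
      ultimately show ?thesis using sk[of k] by simp
    qed
    ultimately have "(\<lambda>k. integral {0..sk k} (Kz u)) \<longlonglongrightarrow> 0"
      using Lim_null_comparison[OF always_eventually, of "\<lambda>k. integral {0..sk k} (Kz u)" "\<lambda>k. 2 * sk k"]
      by simp
    then have "(\<lambda>k. integral {0..1} (Kz u) - integral {0..sk k} (Kz u)) \<longlonglongrightarrow> integral {0..1} (Kz u) - 0"
      by (intro tendsto_intros)
    moreover have "Ik = (\<lambda>k. integral {0..1} (Kz u) - integral {0..sk k} (Kz u))"
      by (rule ext) (rule comb)
    ultimately show ?thesis by simp
  qed
  have "integral {0..1} (fz u) = integral {0..1} (Kz u)"
    using LIMSEQ_unique[OF lim1 lim2] .
  also have "\<dots> = 2 * integral {0..1} (D 0 u)"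
    by (simp add: Kz_def[abs_def])
  also have "\<dots> = Fq u / 4" by (simp add: Fq_def)
  finally have "integral {0..1} (fz u) = Fq u / 4" .
  then show ?thesis using mc has_integral_integral by metis
qed

end


context pctx begin

definition Pn :: "real \<Rightarrow> real" where "Pn n = n\<^sup>2 + 2 / (p + 1) * n powr (p + 1)"
definition N0 :: "real \<Rightarrow> real" where "N0 u = ((p + 1) / 2 * u) powr (1 / (p - 1))"
definition Phi :: "real \<Rightarrow> real" where "Phi u = (N0 u)\<^sup>2 * (1 + u)"

lemma Pn_strict: assumes "0 \<le> n" "n < m" shows "Pn n < Pn m"
proof -
  have "n\<^sup>2 < m\<^sup>2" using assms by (intro power_strict_mono) auto
  moreover have "n powr (p+1) < m powr (p+1)" using assms p1 by (intro powr_less_mono2) auto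
  moreover have "2 / (p + 1) * n powr (p+1) < 2 / (p + 1) * m powr (p+1)"
    using calculation(2) p1 by (intro mult_strict_left_mono) auto
  ultimately show ?thesis by (simp add: Pn_def)
qed

lemma N0_nonneg: "N0 u \<ge> 0" by (simp add: N0_def)

lemma N0_pow: assumes "u \<ge> 0" shows "(N0 u) powr (p - 1) = (p + 1) / 2 * u"
proof -
  have "(N0 u) powr (p - 1) = ((p + 1) / 2 * u) powr (1 / (p - 1) * (p - 1))"
    unfolding N0_def by (simp add: powr_powr)
  also have "1 / (p - 1) * (p - 1) = 1" using p1 by simp
  finally show ?thesis using assms p1 by simp
qed

lemma Pn_N0: assumes "u \<ge> 0" shows "Pn (N0 u) = Phi u"
proof (cases "u = 0")
  case True
  then show ?thesis using p1 by (simp add: Pn_def Phi_def N0_def)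
next
  case False
  then have u: "u > 0" using assms by simp
  have Npos: "N0 u > 0" using u p1 by (simp add: N0_def)
  have "(N0 u) powr (p + 1) = (N0 u) powr 2 * (N0 u) powr (p - 1)"
    using powr_add[of "N0 u" 2 "p - 1"] by (simp add: add.commute)
  also have "\<dots> = (N0 u)\<^sup>2 * ((p + 1) / 2 * u)" using N0_pow[OF assms] Npos
    by (simp add: powr_numeral)
  finally have "2 / (p + 1) * (N0 u) powr (p + 1) = (N0 u)\<^sup>2 * u" using p1 by (simp add: field_simps)
  then show ?thesis by (simp add: Pn_def Phi_def algebra_simps)
qed

lemma Namp_Phi: assumes "u \<ge> 0" shows "Namp p (Phi u) = N0 u"
  unfolding Namp_def
proof (rule the_equality)
  show "0 \<le> N0 u \<and> (N0 u)\<^sup>2 + 2 / (p + 1) * N0 u powr (p + 1) = Phi u"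
    using Pn_N0[OF assms] N0_nonneg by (simp add: Pn_def)
  fix n assume n: "0 \<le> n \<and> n\<^sup>2 + 2 / (p + 1) * n powr (p + 1) = Phi u"
  then have "Pn n = Pn (N0 u)" using Pn_N0[OF assms] by (simp add: Pn_def)
  then show "n = N0 u" using Pn_strict[of n "N0 u"] Pn_strict[of "N0 u" n] n N0_nonneg
    by (metis linorder_neqE_linordered_idom order_less_irrefl)
qed

lemma Lper_Phi: assumes "u \<ge> 0" shows "Lper p (Phi u) = Fq u"
proof -
  have "2 / (p + 1) * Namp p (Phi u) powr (p - 1) = u"
    using Namp_Phi[OF assms] N0_pow[OF assms] p1 by (simp add: field_simps)
  then have "Lper p (Phi u) = 4 * integral {0..1} (fz u)"
    unfolding Lper_def fz_def by simp
  also have "\<dots> = Fq u" using integral_unique[OF fz_integral[OF assms]] by simp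
  finally show ?thesis .
qed

lemma Phi_nonneg: "u \<ge> 0 \<Longrightarrow> Phi u \<ge> 0" by (simp add: Phi_def)

lemma Phi_strict: assumes "0 \<le> u" "u < v" shows "Phi u < Phi v"
proof -
  have "N0 u < N0 v" using assms p1 unfolding N0_def by (intro powr_less_mono2) auto
  then have "(N0 u)\<^sup>2 < (N0 v)\<^sup>2" using N0_nonneg by (intro power_strict_mono) auto
  then show ?thesis using assms unfolding Phi_def
    by (intro mult_strict_mono) auto
qed

lemma Phi_surj: assumes "c \<ge> 0" shows "\<exists>u\<ge>0. Phi u = c"
proof -
  have cP: "continuous_on {0..c+1} Pn"
  proof -
    have "continuous_on {0..c+1} (\<lambda>n::real. n powr (p + 1))"
      by (rule continuous_on_powr') (use p1 in \<open>auto intro!: continuous_intros\<close>)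
    then have "continuous_on {0..c+1} (\<lambda>n::real. n\<^sup>2 + 2 / (p + 1) * n powr (p + 1))"
      by (intro continuous_on_add continuous_on_mult continuous_on_const continuous_on_power continuous_on_id)
    then show ?thesis unfolding Pn_def[abs_def] .
  qed
  have "Pn 0 \<le> c" using assms p1 by (simp add: Pn_def)
  moreover have "c \<le> Pn (c+1)"
  proof -
    have "c \<le> (c+1)\<^sup>2" using assms by (simp add: power2_eq_square algebra_simps)
    then show ?thesis unfolding Pn_def using p1 assms by (smt (verit) divide_nonneg_nonneg powr_ge_zero mult_nonneg_nonneg)
  qed
  ultimately obtain n where n: "0 \<le> n" "n \<le> c + 1" "Pn n = c"
    using IVT'[of Pn 0 c "c+1", OF _ _ _ cP] assms by auto
  define u where "u = 2 / (p + 1) * n powr (p - 1)"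
  have u: "u \<ge> 0" using p1 by (simp add: u_def)
  have "N0 u = (n powr (p - 1)) powr (1 / (p - 1))" using p1 by (simp add: N0_def u_def)
  also have "\<dots> = n" using p1 n(1) by (simp add: powr_powr)
  finally have "Phi u = c" using Pn_N0[OF u] n by simp
  then show ?thesis using u by blast
qed

lemma Phi_bij: "bij_betw Phi {0..} {0..}"
  unfolding bij_betw_def
proof
  show "inj_on Phi {0..}"
    by (rule inj_onI) (metis atLeast_iff linorder_neqE_linordered_idom order_less_irrefl Phi_strict)
  show "Phi ` {0..} = {0..}" using Phi_surj Phi_nonneg by fastforce
qed

lemma Fq_bij: "bij_betw Fq {0..} {0<..2*pi}"
  unfolding bij_betw_def using Fq_inj Fq_image by simp

lemma Lper_bij: "bij_betw (Lper p) {0..} {0<..2*pi}"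
proof -
  have iv: "bij_betw (inv_into {0..} Phi) {0..} {0..}" by (rule bij_betw_inv_into[OF Phi_bij])
  have "bij_betw (Fq \<circ> inv_into {0..} Phi) {0..} {0<..2*pi}"
    by (rule bij_betw_trans[OF iv Fq_bij])
  moreover have "(Fq \<circ> inv_into {0..} Phi) c = Lper p c" if "c \<in> {0..}" for c
  proof -
    have "c \<in> Phi ` {0..}" using that Phi_bij by (simp add: bij_betw_def)
    then have "Phi (inv_into {0..} Phi c) = c" by (rule f_inv_into_f)
    moreover have "inv_into {0..} Phi c \<in> {0..}"
      using iv that by (auto simp: bij_betw_def)
    ultimately show ?thesis using Lper_Phi by (metis atLeast_iff comp_apply)
  qed
  ultimately show ?thesis using bij_betw_cong by blast
qed

end


context pctx begin

definition V where "V = Fq ` U"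
definition H where "H = inv_into U Fq"

lemma Fq_inj_U: "inj_on Fq U"
proof (rule inj_onI)
  fix x y assume "x \<in> U" "y \<in> U" "Fq x = Fq y"
  then show "x = y" using Fq_strict_dec
    by (metis linorder_neqE_linordered_idom order_less_irrefl)
qed

lemma H_Fq: "u \<in> U \<Longrightarrow> H (Fq u) = u"
  unfolding H_def by (rule inv_into_f_f[OF Fq_inj_U])

lemma Fq_H: "s \<in> V \<Longrightarrow> Fq (H s) = s"
  unfolding H_def V_def by (rule f_inv_into_f)

lemma H_in_U: "s \<in> V \<Longrightarrow> H s \<in> U"
  unfolding H_def V_def by (rule inv_into_into)

lemma U_nbhd: assumes "u \<in> U" obtains d where "d > 0" "\<And>z. \<bar>z - u\<bar> \<le> d \<Longrightarrow> z \<in> U"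
proof -
  define d where "d = (u + dl) / 2"
  have "d > 0" using assms by (simp add: U_def d_def)
  moreover have "z \<in> U" if "\<bar>z - u\<bar> \<le> d" for z
  proof -
    have "u - z \<le> d" using that by (simp add: abs_le_iff)
    then show ?thesis using assms unfolding U_def d_def by simp
  qed
  ultimately show ?thesis using that by blast
qed

lemma Fq_isCont: "u \<in> U \<Longrightarrow> isCont Fq u"
  using Fq_deriv DERIV_isCont by blast

lemma V_open: "open V"
proof (rule Topological_Spaces.openI)
  fix s assume "s \<in> V"
  then obtain u0 where u0: "u0 \<in> U" "s = Fq u0" by (auto simp: V_def)
  obtain d where d: "d > 0" "\<And>z. \<bar>z - u0\<bar> \<le> d \<Longrightarrow> z \<in> U" using U_nbhd[OF u0(1)] by blast
  have a: "u0 - d \<in> U" "u0 + d \<in> U" using d by auto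
  have "{Fq (u0 + d)<..<Fq (u0 - d)} \<subseteq> V"
  proof
    fix y assume y: "y \<in> {Fq (u0 + d)<..<Fq (u0 - d)}"
    have c: "continuous_on {u0 - d..u0 + d} Fq"
      using d by (intro continuous_at_imp_continuous_on) (auto intro!: Fq_isCont)
    obtain x where "u0 - d \<le> x" "x \<le> u0 + d" "Fq x = y"
      using IVT2'[of Fq "u0 + d" y "u0 - d", OF _ _ _ c] y d by auto
    moreover then have "x \<in> U" using d by auto
    ultimately show "y \<in> V" by (auto simp: V_def)
  qed
  moreover have "s \<in> {Fq (u0 + d)<..<Fq (u0 - d)}"
    using Fq_strict_dec[OF u0(1) a(2)] Fq_strict_dec[OF a(1) u0(1)] d u0 by auto
  ultimately show "\<exists>T. open T \<and> s \<in> T \<and> T \<subseteq> V" by (intro exI[of _ "{Fq (u0 + d)<..<Fq (u0 - d)}"]) auto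
qed

lemma H_isCont: assumes "s \<in> V" shows "isCont H s"
proof -
  obtain u0 where u0: "u0 \<in> U" "s = Fq u0" using assms by (auto simp: V_def)
  obtain d where d: "d > 0" "\<And>z. \<bar>z - u0\<bar> \<le> d \<Longrightarrow> z \<in> U" using U_nbhd[OF u0(1)] by blast
  have "isCont H (Fq u0)"
    by (rule isCont_inverse_function[where f=Fq and g=H and x=u0, OF d(1)]) (auto intro: H_Fq Fq_isCont d(2))
  then show ?thesis using u0 by simp
qed

lemma dFq_neg: "u \<in> U \<Longrightarrow> deriv Fq u < 0"
  using Fq_deriv Fq_deriv_neg DERIV_imp_deriv by fastforce

lemma H_deriv: assumes "s \<in> V" shows "(H has_real_derivative inverse (deriv Fq (H s))) (at s)"
proof -
  obtain e where e: "e > 0" "ball s e \<subseteq> V" using V_open assms openE by blast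
  have hu: "H s \<in> U" using H_in_U[OF assms] .
  show ?thesis
  proof (rule DERIV_inverse_function[where a = "s - e" and b = "s + e"])
    show "(Fq has_real_derivative deriv Fq (H s)) (at (H s))"
      using Fq_deriv[OF hu] DERIV_imp_deriv by fastforce
    show "deriv Fq (H s) \<noteq> 0" using dFq_neg[OF hu] by simp
    fix y assume "s - e < y" "y < s + e"
    then have "y \<in> ball s e" by (simp add: dist_real_def abs_less_iff)
    then show "Fq (H y) = y" using e by (intro Fq_H) auto
  next
    show "isCont H s" by (rule H_isCont[OF assms])
  qed (use e in auto)
qed

definition R where "R u = 1 / deriv Fq u"

lemma R_Ck: "Ck k R U"
proof -
  have d: "Ck k (deriv Fq) U" using Fq_Ck[of "Suc k"] by simp
  have m: "Ck k (\<lambda>u. -1 * deriv Fq u) U" by (rule Ck_cmult[OF U_open d])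
  have "Ck k (\<lambda>u. 1 / (-1 * deriv Fq u)) U"
    by (rule Ck_comp[OF U_open _ Ck_inverse m]) (use dFq_neg in auto)
  then have "Ck k (\<lambda>u. -1 * (1 / (-1 * deriv Fq u))) U" by (rule Ck_cmult[OF U_open])
  then show ?thesis by (rule Ck_cong[OF U_open, rotated]) (simp add: R_def)
qed

lemma H_Ck: "Ck k H V"
proof (induction k)
  case 0
  show ?case using H_isCont by (simp add: continuous_at_imp_continuous_on)
next
  case (Suc k)
  have "Ck k (\<lambda>s. R (H s)) V"
    by (rule Ck_comp[OF V_open U_open R_Ck Suc.IH]) (use H_in_U in auto)
  then show ?case
    by (rule Ck_SucI[OF V_open, rotated]) (use H_deriv in \<open>auto simp: R_def divide_inverse\<close>)
qed

end


context pctx begin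

definition Dg :: "nat \<Rightarrow> real \<Rightarrow> real \<Rightarrow> real" where
  "Dg j u th = - (th ^ j) * (deriv ^^ Suc j) Fq (th * u)"

lemma thU: "u \<in> U \<Longrightarrow> th \<in> {0..1} \<Longrightarrow> th * u \<in> U"
proof -
  assume u: "u \<in> U" and th: "th \<in> {0..1}"
  show ?thesis
  proof (cases "u \<ge> 0")
    case True then show ?thesis using th dl_pos by (simp add: U_def) (smt (verit) mult_nonneg_nonneg)
  next
    case False
    then have "th * u \<ge> u" using th by (simp add: mult_le_cancel_right1)
    then show ?thesis using u by (simp add: U_def)
  qed
qed

lemma iter_deriv: "x \<in> U \<Longrightarrow> ((deriv ^^ m) Fq has_real_derivative (deriv ^^ Suc m) Fq x) (at x)"
proof -
  assume x: "x \<in> U"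
  have "((deriv ^^ m) Fq) differentiable (at x)" by (rule Ck_deriv_iter[OF Fq_Ck x])
  then show ?thesis by (simp add: DERIV_deriv_iff_real_differentiable)
qed

lemma Dg_der: assumes "u \<in> U" "th \<in> {0..1}"
  shows "((\<lambda>u. Dg j u th) has_real_derivative Dg (Suc j) u th) (at u)"
proof -
  have "((\<lambda>u. (deriv ^^ Suc j) Fq (th * u)) has_real_derivative (deriv ^^ Suc (Suc j)) Fq (th * u) * th) (at u)"
    by (rule DERIV_chain2[where g="\<lambda>u. th * u", OF iter_deriv[OF thU[OF assms]]]) (auto intro!: derivative_eq_intros)
  then have "((\<lambda>u. - (th ^ j) * (deriv ^^ Suc j) Fq (th * u)) has_real_derivative
      - (th ^ j) * ((deriv ^^ Suc (Suc j)) Fq (th * u) * th)) (at u)"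
    by (rule DERIV_cmult)
  then show ?thesis by (simp add: Dg_def[abs_def] algebra_simps del: funpow.simps)
qed

lemma Dg_cont: "continuous_on (U \<times> {0..1}) (\<lambda>(u,th). Dg j u th)"
proof -
  have c: "continuous_on U ((deriv ^^ Suc j) Fq)"
    using Ck_imp_cont[OF Ck_iter[of "Suc j" 0 Fq U]] Fq_Ck by simp
  have m: "continuous_on (U \<times> {0..1}) (\<lambda>x. snd x * fst x)" by (intro continuous_intros)
  have "continuous_on (U \<times> {0..1}) (\<lambda>x. (deriv ^^ Suc j) Fq (snd x * fst x))"
    by (rule continuous_on_compose2[OF c m]) (auto intro: thU)
  then have "continuous_on (U \<times> {0..1}) (\<lambda>x. - (snd x ^ j) * (deriv ^^ Suc j) Fq (snd x * fst x))"
    by (intro continuous_intros)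
  then show ?thesis by (simp add: Dg_def case_prod_beta' del: funpow.simps)
qed

definition G where "G u = integral {0..1} (Dg 0 u)"

lemma G_Ck: "Ck k G U"
  unfolding G_def[abs_def] by (rule Ck_param_integral[of U Dg, OF U_open U_convex Dg_der Dg_cont])

lemma G_ident: assumes u: "u \<in> U" shows "2 * pi - Fq u = u * G u"
proof -
  have int: "(Dg 0 u has_integral G u) {0..1}"
    unfolding G_def using param_cont_slice[OF Dg_cont u]
    by (intro integrable_integral integrable_continuous_interval)
  have "((\<lambda>th. u * deriv Fq (th * u)) has_integral Fq (1 * u) - Fq (0 * u)) {0..1}"
  proof (rule fundamental_theorem_of_calculus)
    fix th :: real assume th: "th \<in> {0..1}"
    have "((\<lambda>th. Fq (th * u)) has_real_derivative deriv Fq (th * u) * u) (at th)"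
      by (rule DERIV_chain2[where g="\<lambda>th. th * u", OF iter_deriv[of _ 0, simplified, OF thU[OF u th]]])
         (auto intro!: derivative_eq_intros)
    then show "((\<lambda>th. Fq (th * u)) has_vector_derivative u * deriv Fq (th * u)) (at th within {0..1})"
      by (auto simp: has_real_derivative_iff_has_vector_derivative[symmetric] mult.commute
               intro: has_field_derivative_at_within)
  qed simp
  moreover have "(\<lambda>th. u * deriv Fq (th * u)) = (\<lambda>th. - u * Dg 0 u th)"
    by (simp add: Dg_def fun_eq_iff)
  ultimately have "((\<lambda>th. - u * Dg 0 u th) has_integral Fq u - 2 * pi) {0..1}"
    using Fq0 by simp
  moreover have "((\<lambda>th. - u * Dg 0 u th) has_integral - u * G u) {0..1}"
    by (rule has_integral_mult_right[OF int])
  ultimately have "Fq u - 2 * pi = - u * G u" by (rule has_integral_unique)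
  then show ?thesis by simp
qed

lemma G_pos: assumes u: "u \<in> U" shows "G u > 0"
proof (cases "u = 0")
  case True
  have "Dg 0 0 = (\<lambda>th. - deriv Fq 0)" by (simp add: Dg_def fun_eq_iff)
  then have "G 0 = integral {0..1} (\<lambda>th::real. - deriv Fq 0)" by (simp add: G_def)
  also have "\<dots> = - deriv Fq 0" by simp
  finally show ?thesis using dFq_neg[OF zero_U] True by simp
next
  case False
  show ?thesis
  proof (cases "u > 0")
    case True
    have "Fq u < 2 * pi" using Fq_strict_dec[OF zero_U u True] Fq0 by simp
    then have "0 < u * G u" using G_ident[OF u] by linarith
    then show ?thesis using True by (simp add: zero_less_mult_iff)
  next
    case f2: False
    then have "u < 0" using False by simp
    then have "Fq u > 2 * pi" using Fq_strict_dec[OF u zero_U] Fq0 by simp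
    then have "u * G u < 0" using G_ident[OF u] by linarith
    then show ?thesis using \<open>u < 0\<close> by (simp add: mult_less_0_iff)
  qed
qed

end


lemma asymp_conv:
  assumes "(\<lambda>s. f s - C * (2*pi - s) powr E) \<in> O[at_left (2*pi)](\<lambda>s. (2*pi - s) powr (E + 1))"
    "C = C'" "E = E'"
  shows "asymp_2pi f C' E'"
  using assms unfolding asymp_2pi_def by simp

context pctx begin

definition kk where "kk = ((p + 1) / 2) powr (2 / (p - 1))"
definition W where "W s = kk * (G (H s)) powr (- (2 / (p - 1))) * (1 + H s)"

lemma kk_pos: "kk > 0" using p1 by (simp add: kk_def)

lemma twopi_V: "2 * pi \<in> V" using Fq0 zero_U by (metis V_def image_eqI)

lemma H_2pi: "H (2 * pi) = 0" using H_Fq[OF zero_U] Fq0 by simp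

lemma exists_r: "\<exists>r>0. r \<le> 2 * pi \<and> ball (2 * pi) r \<subseteq> V \<and> (\<forall>s\<in>ball (2 * pi) r. \<bar>H s\<bar> < 1/2)"
proof -
  obtain e1 where e1: "e1 > 0" "ball (2*pi) e1 \<subseteq> V" using V_open twopi_V openE by blast
  have "continuous (at (2*pi)) H" using H_isCont[OF twopi_V] .
  then obtain d where d: "d > 0" "\<And>x'. dist x' (2*pi) < d \<Longrightarrow> dist (H x') (H (2*pi)) < 1/2"
    unfolding continuous_at_eps_delta by (meson divide_pos_pos zero_less_one zero_less_numeral)
  define r where "r = min (min e1 d) (2 * pi)"
  have "r > 0" using e1 d pi_gt_zero by (simp add: r_def)
  moreover have "ball (2*pi) r \<subseteq> V" using e1 by (auto simp: r_def)
  moreover have "\<bar>H s\<bar> < 1/2" if "s \<in> ball (2*pi) r" for s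
    using d(2)[of s] that H_2pi by (auto simp: r_def dist_commute dist_real_def)
  moreover have "r \<le> 2 * pi" by (simp add: r_def)
  ultimately show ?thesis by blast
qed

lemma GH_Ck: assumes "open B" "B \<subseteq> V" shows "Ck k (\<lambda>s. G (H s)) B"
  by (rule Ck_comp[OF assms(1) U_open G_Ck Ck_subset[OF assms(1,2) H_Ck]]) (use assms H_in_U in auto)

lemma W_Ck: assumes "open B" "B \<subseteq> V" shows "Ck k W B"
proof -
  have a: "Ck k (\<lambda>s. 1 * (G (H s)) powr (- (2 / (p - 1)))) B"
    by (rule Ck_comp[OF assms(1) _ Ck_powr GH_Ck[OF assms]]) (use assms G_pos H_in_U in auto)
  have b: "Ck k (\<lambda>s. 1 + H s) B"
    by (rule Ck_add[OF assms(1) Ck_const Ck_subset[OF assms(1,2) H_Ck]])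
  have "Ck k (\<lambda>s. kk * ((1 * (G (H s)) powr (- (2 / (p - 1)))) * (1 + H s))) B"
    by (rule Ck_cmult[OF assms(1) Ck_mult[OF assms(1) a b]])
  then show ?thesis by (rule Ck_cong[OF assms(1), rotated]) (simp add: W_def)
qed

lemma W_pos: assumes "s \<in> V" "\<bar>H s\<bar> < 1/2" shows "W s > 0"
  using assms kk_pos G_pos[OF H_in_U[OF assms(1)]] by (simp add: W_def)

lemma M_Phi: assumes "s \<in> {0<..2*pi}"
  shows "inv_into {0..} (Lper p) s = Phi (H s) \<and> s \<in> V \<and> H s \<ge> 0"
proof -
  obtain u where u: "u \<ge> 0" "Fq u = s" using assms Fq_image by (metis atLeast_iff imageE)
  have uU: "u \<in> U" using u dl_pos by (simp add: U_def)
  have Hs: "H s = u" using H_Fq[OF uU] u by simp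
  have "Lper p (Phi u) = s" using Lper_Phi[OF u(1)] u by simp
  then have "inv_into {0..} (Lper p) s = Phi u"
    by (intro inv_into_f_eq) (use Lper_bij Phi_nonneg u in \<open>auto simp: bij_betw_def\<close>)
  moreover have "s \<in> V" using uU u by (auto simp: V_def)
  ultimately show ?thesis using Hs u by simp
qed

lemma Phi_pos_form: assumes "u > 0" shows "Phi u = kk * u powr (2 / (p - 1)) * (1 + u)"
proof -
  have y: "(p + 1) / 2 * u > 0" using assms p1 by simp
  have "(N0 u)\<^sup>2 = (N0 u) powr 2" using y by (simp add: N0_def powr_numeral)
  also have "\<dots> = ((p + 1) / 2 * u) powr (1 / (p - 1) * 2)" unfolding N0_def by (rule powr_powr)
  also have "1 / (p - 1) * 2 = 2 / (p - 1)" by simp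
  finally have "(N0 u)\<^sup>2 = ((p + 1) / 2 * u) powr (2 / (p - 1))" .
  also have "\<dots> = ((p + 1) / 2) powr (2 / (p - 1)) * u powr (2 / (p - 1))"
    by (rule powr_mult)
  also have "\<dots> = kk * u powr (2 / (p - 1))" by (simp add: kk_def)
  finally show ?thesis by (simp add: Phi_def)
qed

lemma M_form: assumes "s \<in> {0<..<2*pi}"
  shows "inv_into {0..} (Lper p) s = (2*pi - s) powr (2 / (p - 1)) * W s"
proof -
  have m: "inv_into {0..} (Lper p) s = Phi (H s)" "s \<in> V" "H s \<ge> 0" using M_Phi[of s] assms by auto
  have hu: "H s \<in> U" using H_in_U[OF m(2)] .
  have "H s \<noteq> 0" using Fq_H[OF m(2)] Fq0 assms by auto
  then have hpos: "H s > 0" using m(3) by simp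
  have gid: "2 * pi - s = H s * G (H s)" using G_ident[OF hu] Fq_H[OF m(2)] by simp
  have gpos: "G (H s) > 0" using G_pos[OF hu] .
  define g where "g = G (H s)"
  have g: "g > 0" using gpos by (simp add: g_def)
  have hg: "H s = (2 * pi - s) / g" using gid gpos by (simp add: g_def)
  have "H s powr (2 / (p - 1)) = ((2 * pi - s) / g) powr (2 / (p - 1))" using hg by simp
  also have "\<dots> = (2 * pi - s) powr (2 / (p - 1)) / g powr (2 / (p - 1))"
    using g assms by (simp add: powr_divide)
  also have "\<dots> = (2 * pi - s) powr (2 / (p - 1)) * g powr (- (2 / (p - 1)))"
    by (simp add: powr_minus_divide)
  finally have "H s powr (2 / (p - 1)) = (2 * pi - s) powr (2 / (p - 1)) * G (H s) powr (- (2 / (p - 1)))"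
    by (simp add: g_def)
  then show ?thesis using m(1) Phi_pos_form[OF hpos] by (simp add: W_def)
qed

lemma Phi_Ck: "Ck k (\<lambda>u. kk * u powr (2 / (p - 1)) * (1 + u)) {0<..}"
  by (rule Ck_mult[OF _ Ck_powr Ck_add[OF _ Ck_const Ck_id]]) auto

lemma M_smooth: "Ck k (inv_into {0..} (Lper p)) {0<..<2*pi}"
proof -
  have sub: "{0<..<2*pi} \<subseteq> V" using M_Phi by auto
  have "Ck k (\<lambda>s. kk * (H s) powr (2 / (p - 1)) * (1 + H s)) {0<..<2*pi}"
  proof (rule Ck_comp[OF _ _ Phi_Ck Ck_subset[OF _ sub H_Ck]])
    show "H ` {0<..<2 * pi} \<subseteq> {0<..}"
    proof
      fix y assume "y \<in> H ` {0<..<2 * pi}"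
      then obtain s where s: "s \<in> {0<..<2*pi}" "y = H s" by auto
      have m: "s \<in> V" "H s \<ge> 0" using M_Phi[of s] s by auto
      have "H s \<noteq> 0" using Fq_H[OF m(1)] Fq0 s by auto
      then show "y \<in> {0<..}" using m s by auto
    qed
  qed auto
  then show ?thesis
  proof (rule Ck_cong[rotated 2])
    fix s assume s: "s \<in> {0<..<2*pi}"
    have m: "inv_into {0..} (Lper p) s = Phi (H s)" "s \<in> V" "H s \<ge> 0" using M_Phi[of s] s by auto
    have "H s \<noteq> 0" using Fq_H[OF m(2)] Fq0 s by auto
    then show "kk * H s powr (2 / (p - 1)) * (1 + H s) = inv_into {0..} (Lper p) s"
      using m Phi_pos_form[of "H s"] by simp
  qed simp
qed

end

theorem lemma2p6:
  fixes p :: real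
  assumes "p > 1"
  defines "M \<equiv> inv_into {0..} (Lper p)"
  shows "bij_betw (Lper p) {0..} {0<..2*pi}
    \<and> smooth_on_real M {0<..<2*pi}
    \<and> (\<exists>\<alpha>>0.
         asymp_2pi M \<alpha> (2 / (p - 1))
       \<and> asymp_2pi (\<lambda>s. sqrt (M s)) (sqrt \<alpha>) (1 / (p - 1))
       \<and> asymp_2pi (deriv M) (- 2 * \<alpha> / (p - 1)) ((3 - p) / (p - 1))
       \<and> asymp_2pi (deriv (\<lambda>s. sqrt (M s))) (- sqrt \<alpha> / (p - 1)) ((2 - p) / (p - 1))
       \<and> asymp_2pi (deriv (deriv M)) (2 * \<alpha> * (3 - p) / (p - 1)\<^sup>2) ((4 - 2 * p) / (p - 1))
       \<and> asymp_2pi (deriv (deriv (\<lambda>s. sqrt (M s)))) (sqrt \<alpha> * (2 - p) / (p - 1)\<^sup>2)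
            ((3 - 2 * p) / (p - 1)))"
proof -
  interpret pctx p using assms by unfold_locales
  have p1: "p - 1 > 0" using assms by simp
  have bij: "bij_betw (Lper p) {0..} {0<..2*pi}" by (rule Lper_bij)
  have sm: "smooth_on_real M {0<..<2*pi}"
    unfolding smooth_on_real_def M_def using Ck_deriv_iter[OF M_smooth] by blast
  obtain r where r: "r > 0" "r \<le> 2 * pi" "ball (2 * pi) r \<subseteq> V" "\<forall>s\<in>ball (2 * pi) r. \<bar>H s\<bar> < 1/2"
    using exists_r by blast
  define B where "B = ball (2 * pi) r"
  have oB: "open B" by (simp add: B_def)
  have BV: "B \<subseteq> V" using r by (simp add: B_def)
  have Wpos: "s \<in> B \<Longrightarrow> W s > 0" for s using W_pos r BV by (auto simp: B_def)
  have WC: "Ck 3 W B" by (rule W_Ck[OF oB BV])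
  have sWC: "Ck 3 (\<lambda>s. sqrt (W s)) B"
    by (rule Ck_comp[OF oB _ Ck_sqrt WC]) (use Wpos in auto)
  define \<alpha> where "\<alpha> = W (2 * pi)"
  have apos: "\<alpha> > 0" unfolding \<alpha>_def by (rule Wpos) (use r in \<open>simp add: B_def\<close>)
  have seg: "s \<in> {2 * pi - r<..<2 * pi} \<Longrightarrow> s \<in> {0<..<2*pi}" for s using r by auto
  have Mf: "M s = (2 * pi - s) powr (2 / (p - 1)) * W s" if "s \<in> {2 * pi - r<..<2 * pi}" for s
    unfolding M_def by (rule M_form[OF seg[OF that]])
  have sMf: "sqrt (M s) = (2 * pi - s) powr (1 / (p - 1)) * sqrt (W s)" if s: "s \<in> {2 * pi - r<..<2 * pi}" for s
  proof -
    have h: "2 * pi - s > 0" using s by simp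
    have "sqrt ((2 * pi - s) powr (2 / (p - 1))) = ((2 * pi - s) powr (2 / (p - 1))) powr (1/2)"
      using h by (simp add: powr_half_sqrt)
    also have "\<dots> = (2 * pi - s) powr (2 / (p - 1) * (1/2))" by (rule powr_powr)
    also have "2 / (p - 1) * (1/2) = 1 / (p - 1)" using p1 by (simp add: field_simps)
    finally show ?thesis using Mf[OF s] by (simp add: real_sqrt_mult)
  qed
  note A1 = asym_main[OF r(1) WC[unfolded B_def] Mf]
  note A2 = asym_main[OF r(1) sWC[unfolded B_def] sMf]
  have ex: "\<exists>\<alpha>>0.
         asymp_2pi M \<alpha> (2 / (p - 1))
       \<and> asymp_2pi (\<lambda>s. sqrt (M s)) (sqrt \<alpha>) (1 / (p - 1))
       \<and> asymp_2pi (deriv M) (- 2 * \<alpha> / (p - 1)) ((3 - p) / (p - 1))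
       \<and> asymp_2pi (deriv (\<lambda>s. sqrt (M s))) (- sqrt \<alpha> / (p - 1)) ((2 - p) / (p - 1))
       \<and> asymp_2pi (deriv (deriv M)) (2 * \<alpha> * (3 - p) / (p - 1)\<^sup>2) ((4 - 2 * p) / (p - 1))
       \<and> asymp_2pi (deriv (deriv (\<lambda>s. sqrt (M s)))) (sqrt \<alpha> * (2 - p) / (p - 1)\<^sup>2)
            ((3 - 2 * p) / (p - 1))"
  proof (intro exI[of _ \<alpha>] conjI apos)
    show "asymp_2pi M \<alpha> (2 / (p - 1))"
      by (rule asymp_conv[OF A1(1)]) (simp_all add: \<alpha>_def)
    show "asymp_2pi (\<lambda>s. sqrt (M s)) (sqrt \<alpha>) (1 / (p - 1))"
      by (rule asymp_conv[OF A2(1)]) (simp_all add: \<alpha>_def)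
    show "asymp_2pi (deriv M) (- 2 * \<alpha> / (p - 1)) ((3 - p) / (p - 1))"
      by (rule asymp_conv[OF A1(2)]) (use p1 in \<open>simp_all add: \<alpha>_def field_simps\<close>)
    show "asymp_2pi (deriv (\<lambda>s. sqrt (M s))) (- sqrt \<alpha> / (p - 1)) ((2 - p) / (p - 1))"
      by (rule asymp_conv[OF A2(2)]) (use p1 in \<open>simp_all add: \<alpha>_def field_simps\<close>)
    show "asymp_2pi (deriv (deriv M)) (2 * \<alpha> * (3 - p) / (p - 1)\<^sup>2) ((4 - 2 * p) / (p - 1))"
      by (rule asymp_conv[OF A1(3)]) (use p1 in \<open>simp_all add: \<alpha>_def field_simps power2_eq_square\<close>)
    show "asymp_2pi (deriv (deriv (\<lambda>s. sqrt (M s)))) (sqrt \<alpha> * (2 - p) / (p - 1)\<^sup>2) ((3 - 2 * p) / (p - 1))"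
      by (rule asymp_conv[OF A2(3)]) (use p1 in \<open>simp_all add: \<alpha>_def field_simps power2_eq_square\<close>)
  qed
  show ?thesis using bij sm ex by blast
qed


end
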